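(* Let $f:\mathbb R^n\to\mathbb R$ be an integrable log-concave function with full-dimensional support. Then for any $\theta\in[0,1]$ and any $t\in(0,1]$, $$\mathcal A_t(f)(0)+_\theta\big(-\mathcal A_t(f)(0)\big)\subseteq\mathcal C_{\theta,t}(f)\subseteq\mathcal A_{t^2}(f)(0)+_{\frac{M_t(f)}{M_{t^2}(f)}\theta}\big(-\mathcal A_{t^2}(f)(0)\big).$$
   Context: For $t\in(0,1]$ and $x\in\mathrm{supp}\,f-\mathrm{supp}\,f$, $\mathcal A_t(f)(x)=\{z\in\mathrm{supp}\,f\cap(x+\mathrm{supp}\,f): f(z)f(z-x)\geq t\Vert f\Vert_\infty^2\}$ (so $\mathcal A_t(f)(0)=\{z:f(z)\geq\sqrt t\Vert f\Vert_\infty\}$); $M_t(f)=\max_{x_0}|\mathcal A_t(f)(x_0)|$ with $|\cdot|$ Lebesgue volume; and $\mathcal C_{\theta,t}(f)=\{x\in\mathrm{supp}\,f-\mathrm{supp}\,f:\ \mathcal A_t(f)(x)\neq\emptyset,\ |\mathcal A_t(f)(x)|\geq\theta M_t(f)\}$. For convex bodies $K,L$ and $\theta\in[0,1]$, the $\theta$-convolution body is $K+_\theta L=\{x\in K+L: |K\cap(x-L)|\geq\theta\max_{z\in\mathbb R^n}|K\cap(z-L)|\}$. *)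

theory Defs
  imports "HOL-Analysis.Analysis"
begin

definition log_concave :: "('a::euclidean_space \<Rightarrow> real) \<Rightarrow> bool" where
  "log_concave f \<longleftrightarrow> (\<forall>x. f x \<ge> 0) \<and>
     (\<forall>x y l. 0 < l \<and> l < 1 \<longrightarrow>
        f (l *\<^sub>R x + (1 - l) *\<^sub>R y) \<ge> (f x powr l) * (f y powr (1 - l)))"

definition supp :: "('a \<Rightarrow> real) \<Rightarrow> 'a set" where
  "supp f = {x. f x > 0}"

definition sup_norm :: "('a \<Rightarrow> real) \<Rightarrow> real" where
  "sup_norm f = (SUP x. f x)"

definition minkowski_sum :: "'a::ab_group_add set \<Rightarrow> 'a set \<Rightarrow> 'a set" where
  "minkowski_sum K L = {a + b | a b. a \<in> K \<and> b \<in> L}"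

definition diff_set :: "'a::ab_group_add set \<Rightarrow> 'a set \<Rightarrow> 'a set" where
  "diff_set K L = {a - b | a b. a \<in> K \<and> b \<in> L}"

definition At :: "real \<Rightarrow> ('a::euclidean_space \<Rightarrow> real) \<Rightarrow> 'a \<Rightarrow> 'a set" where
  "At t f x = {z. z \<in> supp f \<and> z \<in> (\<lambda>y. x + y) ` supp f \<and>
                  f z * f (z - x) \<ge> t * (sup_norm f)\<^sup>2}"

definition Mt :: "real \<Rightarrow> ('a::euclidean_space \<Rightarrow> real) \<Rightarrow> real" where
  "Mt t f = (SUP x0 \<in> diff_set (supp f) (supp f). measure lebesgue (At t f x0))"

definition Ct :: "real \<Rightarrow> real \<Rightarrow> ('a::euclidean_space \<Rightarrow> real) \<Rightarrow> 'a set" where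
  "Ct \<theta> t f = {x \<in> diff_set (supp f) (supp f). At t f x \<noteq> {} \<and>
                  measure lebesgue (At t f x) \<ge> \<theta> * Mt t f}"

definition conv_body :: "'a::euclidean_space set \<Rightarrow> real \<Rightarrow> 'a set \<Rightarrow> 'a set" where
  "conv_body K \<theta> L = {x \<in> minkowski_sum K L.
      measure lebesgue (K \<inter> (\<lambda>y. x - y) ` L) \<ge>
        \<theta> * (SUP z. measure lebesgue (K \<inter> (\<lambda>y. z - y) ` L))}"

end

theory Submission
  imports Defs
begin


lemma convexI_open:
  assumes "\<And>x y u. x \<in> S \<Longrightarrow> y \<in> S \<Longrightarrow> 0 < u \<Longrightarrow> u < 1 \<Longrightarrow> u *\<^sub>R x + (1-u) *\<^sub>R y \<in> S"
  shows "convex S"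
  unfolding convex_def
proof (intro ballI allI impI)
  fix x y and u v :: real
  assume xy: "x \<in> S" "y \<in> S" and uv: "0 \<le> u" "0 \<le> v" "u + v = 1"
  show "u *\<^sub>R x + v *\<^sub>R y \<in> S"
  proof (cases "u = 0 \<or> v = 0")
    case True
    then show ?thesis using xy uv by auto
  next
    case False
    then have "v = 1 - u" "0 < u" "u < 1" using uv by auto
    then show ?thesis using assms xy by simp
  qed
qed

lemma lc_nonneg: "log_concave f \<Longrightarrow> 0 \<le> f x"
  by (simp add: log_concave_def)

lemma lc_ineq: "log_concave f \<Longrightarrow> 0 < l \<Longrightarrow> l < 1 \<Longrightarrow>
   f (l *\<^sub>R x + (1 - l) *\<^sub>R y) \<ge> (f x powr l) * (f y powr (1 - l))"
  by (simp add: log_concave_def)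

lemma lc_mid:
  assumes "log_concave f"
  shows "f ((1/2) *\<^sub>R x + (1/2) *\<^sub>R y) \<ge> sqrt (f x * f y)"
proof -
  have "f ((1/2) *\<^sub>R x + (1 - 1/2) *\<^sub>R y) \<ge> (f x powr (1/2)) * (f y powr (1 - 1/2))"
    using lc_ineq[OF assms, of "1/2"] by simp
  moreover have "(f x powr (1/2)) * (f y powr (1 - 1/2)) = sqrt (f x * f y)"
    using lc_nonneg[OF assms] by (simp add: powr_half_sqrt real_sqrt_mult)
  ultimately show ?thesis by simp
qed

lemma At_mem: "z \<in> At t f x \<longleftrightarrow> f z > 0 \<and> f (z - x) > 0 \<and> f z * f (z - x) \<ge> t * (sup_norm f)\<^sup>2"
proof -
  have "z \<in> (\<lambda>y. x + y) ` supp f \<longleftrightarrow> z - x \<in> supp f"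
    by (auto simp: image_iff intro!: bexI[of _ "z - x"])
  then show ?thesis by (auto simp: At_def supp_def)
qed

lemma At_convex:
  assumes lc: "log_concave f" and t: "0 \<le> t"
  shows "convex (At t f x)"
proof (rule convexI_open)
  fix z1 z2 and u :: real
  assume z: "z1 \<in> At t f x" "z2 \<in> At t f x" and u: "0 < u" "u < 1"
  define c where "c = t * (sup_norm f)\<^sup>2"
  have c: "0 \<le> c" using t by (simp add: c_def)
  have z1: "f z1 > 0" "f (z1 - x) > 0" "f z1 * f (z1 - x) \<ge> c"
    using z(1) by (auto simp: At_mem c_def)
  have z2: "f z2 > 0" "f (z2 - x) > 0" "f z2 * f (z2 - x) \<ge> c"
    using z(2) by (auto simp: At_mem c_def)
  define w where "w = u *\<^sub>R z1 + (1-u) *\<^sub>R z2"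
  have wx: "w - x = u *\<^sub>R (z1 - x) + (1-u) *\<^sub>R (z2 - x)"
    by (simp add: w_def algebra_simps)
  have a: "f w \<ge> f z1 powr u * f z2 powr (1-u)"
    using lc_ineq[OF lc u] by (simp add: w_def)
  have b: "f (w - x) \<ge> f (z1 - x) powr u * f (z2 - x) powr (1-u)"
    using lc_ineq[OF lc u] wx by simp
  have pa: "f z1 powr u * f z2 powr (1-u) > 0" using z1 z2 by simp
  have pb: "f (z1 - x) powr u * f (z2 - x) powr (1-u) > 0" using z1 z2 by simp
  have "c powr u * c powr (1-u) \<le> (f z1 * f (z1 - x)) powr u * (f z2 * f (z2 - x)) powr (1-u)"
    using z1 z2 c u by (intro mult_mono powr_mono2) auto
  also have "\<dots> = (f z1 powr u * f z2 powr (1-u)) * (f (z1 - x) powr u * f (z2 - x) powr (1-u))"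
    using z1 z2 by (simp add: powr_mult)
  also have "\<dots> \<le> f w * f (w - x)"
    using a b pa pb by (intro mult_mono) auto
  finally have main: "f w * f (w - x) \<ge> c powr u * c powr (1-u)" .
  have "c powr u * c powr (1-u) \<ge> c"
  proof (cases "c = 0")
    case False
    then have "c powr u * c powr (1-u) = c" using c by (simp add: powr_add[symmetric])
    then show ?thesis by simp
  qed simp
  with main have "f w * f (w - x) \<ge> c" by linarith
  moreover have "f w > 0" using a pa by linarith
  moreover have "f (w - x) > 0" using b pb by linarith
  ultimately show "u *\<^sub>R z1 + (1-u) *\<^sub>R z2 \<in> At t f x"
    by (simp add: At_mem c_def w_def)
qed

lemma At_shift:
  assumes lc: "log_concave f" and z: "z \<in> At t f x"
  shows "z - (1/2) *\<^sub>R x \<in> At t f 0"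
proof -
  have eq: "z - (1/2) *\<^sub>R x = (1/2) *\<^sub>R z + (1/2) *\<^sub>R (z - x)"
  proof -
    have h: "(1/2::real) *\<^sub>R z + (1/2) *\<^sub>R z = z" by (simp flip: scaleR_add_left)
    show ?thesis by (simp add: scaleR_diff_right) (metis h add_diff_eq)
  qed
  have z1: "f z > 0" "f (z - x) > 0" "f z * f (z - x) \<ge> t * (sup_norm f)\<^sup>2"
    using z by (auto simp: At_mem)
  have m: "f (z - (1/2) *\<^sub>R x) \<ge> sqrt (f z * f (z - x))"
    using lc_mid[OF lc, of z "z - x"] eq by simp
  have pos: "sqrt (f z * f (z - x)) > 0" using z1 by simp
  have "f (z - (1/2) *\<^sub>R x) * f (z - (1/2) *\<^sub>R x) \<ge> sqrt (f z * f (z - x)) * sqrt (f z * f (z - x))"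
    using m pos lc_nonneg[OF lc] by (intro mult_mono) auto
  also have "sqrt (f z * f (z - x)) * sqrt (f z * f (z - x)) = f z * f (z - x)"
    using z1 by simp
  finally have sq: "f z * f (z - x) \<le> f (z - (1/2) *\<^sub>R x) * f (z - (1/2) *\<^sub>R x)" .
  have "f (z - (1/2) *\<^sub>R x) > 0" using m pos by linarith
  then show ?thesis using z1 sq by (simp add: At_mem)
qed

lemma convex_sets_lebesgue:
  fixes S :: "'a::euclidean_space set"
  assumes "convex S" shows "S \<in> sets lebesgue"
proof -
  have n: "negligible (S - interior S)"
    using negligible_convex_frontier[OF assms]
    by (rule negligible_subset) (auto simp: frontier_def dest: closure_subset[THEN subsetD])
  have "S = interior S \<union> (S - interior S)" using interior_subset by blast
  moreover have "interior S \<in> sets lebesgue" by (simp add: borel_open)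
  moreover have "S - interior S \<in> sets lebesgue" using n negligible_imp_sets by blast
  ultimately show ?thesis by (metis sets.Un)
qed

lemma pos_measure_fmeasurable:
  assumes "measure M A > 0" shows "A \<in> fmeasurable M"
proof (rule fmeasurableI)
  show A: "A \<in> sets M"
    using assms by (metis emeasure_notin_sets enn2real_0 less_irrefl measure_def)
  show "emeasure M A < \<infinity>"
    using assms by (cases "emeasure M A = \<infinity>") (auto simp: measure_def less_top)
qed

lemma bound_lmeasurable:
  fixes f :: "'a::euclidean_space \<Rightarrow> real"
  assumes int: "f integrable_on UNIV" and nn: "\<And>x. 0 \<le> f x" and E: "E \<in> sets lebesgue"
    and d: "0 < \<delta>" and le: "\<And>x. x \<in> E \<Longrightarrow> \<delta> \<le> f x"
  shows "E \<in> lmeasurable"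
proof -
  have "indicat_real E integrable_on UNIV"
  proof (rule measurable_bounded_by_integrable_imp_integrable_real[where g="\<lambda>x. f x / \<delta>"])
    show "indicat_real E \<in> borel_measurable (lebesgue_on UNIV)" using E by simp
    show "(\<lambda>x. f x / \<delta>) integrable_on UNIV" using int d by simp
    show "\<bar>indicat_real E x\<bar> \<le> f x / \<delta>" if "x \<in> UNIV" for x
      using le nn d by (auto simp: indicator_def field_simps)
    show "UNIV \<in> sets lebesgue" by simp
  qed
  then show ?thesis by (simp add: measurable_integrable)
qed

lemma bound_integral:
  fixes f :: "'a::euclidean_space \<Rightarrow> real"
  assumes int: "f integrable_on UNIV" and nn: "\<And>x. 0 \<le> f x" and E: "E \<in> lmeasurable"
    and d: "0 \<le> \<delta>" and le: "\<And>x. x \<in> E \<Longrightarrow> \<delta> \<le> f x"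
  shows "\<delta> * measure lebesgue E \<le> integral UNIV f"
proof (rule has_integral_le)
  show "((\<lambda>x. \<delta> * indicat_real E x) has_integral \<delta> * measure lebesgue E) UNIV"
    using E by (intro has_integral_mult_right) (simp add: lmeasurable_iff_has_integral)
  show "(f has_integral integral UNIV f) UNIV" using int by (simp add: integrable_integral)
  show "\<delta> * indicat_real E x \<le> f x" if "x \<in> UNIV" for x
    using le nn d by (auto simp: indicator_def)
qed

lemma lc_bdd:
  fixes f :: "'a::euclidean_space \<Rightarrow> real"
  assumes lc: "log_concave f" and int: "f integrable_on UNIV" and ne: "interior (supp f) \<noteq> {}"
  shows "bdd_above (range f)"
proof -
  have nn: "\<And>x. 0 \<le> f x" using lc_nonneg[OF lc] .
  have cvx: "convex {x. \<delta> \<le> f x}" if "0 < \<delta>" for \<delta>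
  proof (rule convexI_open)
    fix x y and u :: real
    assume xy: "x \<in> {x. \<delta> \<le> f x}" "y \<in> {x. \<delta> \<le> f x}" and u: "0 < u" "u < 1"
    have "\<delta> = \<delta> powr u * \<delta> powr (1-u)" using that by (simp add: powr_add[symmetric])
    also have "\<dots> \<le> f x powr u * f y powr (1-u)"
      using xy u that by (intro mult_mono powr_mono2) auto
    also have "\<dots> \<le> f (u *\<^sub>R x + (1-u) *\<^sub>R y)" using lc_ineq[OF lc u] .
    finally show "u *\<^sub>R x + (1-u) *\<^sub>R y \<in> {x. \<delta> \<le> f x}" by simp
  qed
  have nsupp: "\<not> negligible (supp f)"
  proof
    assume "negligible (supp f)"
    then have "negligible (interior (supp f))" by (rule negligible_subset) (rule interior_subset)
    with ne show False using open_not_negligible by blast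
  qed
  have seq: "supp f = (\<Union>k. {x. 1 / real (Suc k) \<le> f x})"
  proof (rule set_eqI, rule iffI)
    fix x assume "x \<in> supp f"
    then have "f x > 0" by (simp add: supp_def)
    then obtain k where "inverse (real (Suc k)) < f x" using reals_Archimedean by blast
    then show "x \<in> (\<Union>k. {x. 1 / real (Suc k) \<le> f x})" by (auto simp: field_simps intro!: exI[of _ k])
  next
    fix x assume "x \<in> (\<Union>k. {x. 1 / real (Suc k) \<le> f x})"
    then obtain k where "1 / real (Suc k) \<le> f x" by auto
    moreover have "0 < 1 / real (Suc k)" by simp
    ultimately have "0 < f x" by linarith
    then show "x \<in> supp f" by (simp add: supp_def)
  qed
  obtain k where nk: "\<not> negligible {x. 1 / real (Suc k) \<le> f x}"
  proof -
    assume h: "\<And>k. \<not> negligible {x. 1 / real (Suc k) \<le> f x} \<Longrightarrow> thesis"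
    show thesis
    proof (rule ccontr)
      assume "\<not> thesis"
      then have "\<forall>k. negligible {x. 1 / real (Suc k) \<le> f x}" using h by blast
      then have "negligible (\<Union>k. {x. 1 / real (Suc k) \<le> f x})"
        by (intro negligible_countable_Union) auto
      with nsupp seq show False by simp
    qed
  qed
  define \<delta> where "\<delta> = 1 / real (Suc k)"
  define E where "E = {x. \<delta> \<le> f x}"
  have d: "0 < \<delta>" by (simp add: \<delta>_def)
  have Es: "E \<in> sets lebesgue" unfolding E_def by (rule convex_sets_lebesgue[OF cvx[OF d]])
  have El: "E \<in> lmeasurable" using bound_lmeasurable[OF int nn Es d] by (simp add: E_def)
  have "measure lebesgue E \<noteq> 0"
    using nk El negligible_iff_measure0[OF El] by (simp add: E_def \<delta>_def)
  then have Epos: "measure lebesgue E > 0"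
    using measure_nonneg[of lebesgue E] by linarith
  define I where "I = integral UNIV f"
  define B where "B = I / ((1/2) ^ DIM('a) * measure lebesgue E)"
  have "f p \<le> B\<^sup>2 / \<delta>" for p
  proof -
    define E' where "E' = (\<lambda>y. (1/2::real) *\<^sub>R y + (1/2) *\<^sub>R p) ` E"
    have mE': "measure lebesgue E' = (1/2) ^ DIM('a) * measure lebesgue E"
      unfolding E'_def using measure_lebesgue_affine[of "1/2::real" "(1/2) *\<^sub>R p" E] by simp
    have mpos: "measure lebesgue E' > 0" using mE' Epos by simp
    have E'l: "E' \<in> lmeasurable" using pos_measure_fmeasurable[OF mpos] .
    have lb: "sqrt (f p * \<delta>) \<le> f y" if "y \<in> E'" for y
    proof -
      obtain w where w: "w \<in> E" "y = (1/2::real) *\<^sub>R w + (1/2) *\<^sub>R p" using \<open>y \<in> E'\<close> by (auto simp: E'_def)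
      have "sqrt (f p * \<delta>) \<le> sqrt (f w * f p)"
        using w(1) nn[of p] by (simp add: E_def) (metis mult.commute mult_right_mono)
      also have "\<dots> \<le> f y" using lc_mid[OF lc, of w p] w(2) by simp
      finally show ?thesis .
    qed
    have "sqrt (f p * \<delta>) * measure lebesgue E' \<le> I"
      unfolding I_def by (rule bound_integral[OF int nn E'l _ lb]) (use nn[of p] d in simp_all)
    then have s: "sqrt (f p * \<delta>) \<le> B"
      using mpos mE' by (simp add: B_def field_simps)
    have "f p * \<delta> = (sqrt (f p * \<delta>))\<^sup>2" using nn[of p] d by simp
    also have "\<dots> \<le> B\<^sup>2" using s nn[of p] d by (intro power_mono) auto
    finally show ?thesis using d by (simp add: field_simps)
  qed
  then show ?thesis by (intro bdd_aboveI2) 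
qed




lemma img_neg: "(\<lambda>y. z - y) ` uminus ` K = (+) z ` (K :: 'a::ab_group_add set)"
  by (simp add: image_image)

context
  fixes f :: "'a::euclidean_space \<Rightarrow> real"
  assumes lc: "log_concave f" and int: "f integrable_on UNIV" and ne: "interior (supp f) \<noteq> {}"
begin

lemma ex_pos: "\<exists>p. f p > 0"
proof -
  obtain p where "p \<in> interior (supp f)" using ne by blast
  then have "p \<in> supp f" using interior_subset by blast
  then show ?thesis by (auto simp: supp_def)
qed

lemma S_ge: "f x \<le> sup_norm f"
  unfolding sup_norm_def by (rule cSUP_upper[OF UNIV_I lc_bdd[OF lc int ne]])

lemma S_pos: "0 < sup_norm f"
proof -
  obtain p where "f p > 0" using ex_pos by blast
  then show ?thesis using S_ge[of p] by linarith
qed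

lemma At0_lb:
  assumes t: "0 \<le> t" and z: "z \<in> At t f 0"
  shows "sqrt t * sup_norm f \<le> f z"
proof -
  have z1: "f z > 0" "t * (sup_norm f)\<^sup>2 \<le> f z * f z" using z by (auto simp: At_mem)
  have "(sqrt t * sup_norm f)\<^sup>2 = t * (sup_norm f)\<^sup>2" using t by (simp add: power_mult_distrib)
  also have "\<dots> \<le> (f z)\<^sup>2" using z1 by (simp add: power2_eq_square)
  finally have sq: "(sqrt t * sup_norm f)\<^sup>2 \<le> (f z)\<^sup>2" .
  show ?thesis using power2_le_imp_le[OF sq] z1(1) by linarith
qed

lemma At0_lmeas:
  assumes t: "0 < t" shows "At t f 0 \<in> lmeasurable"
proof (rule bound_lmeasurable[OF int lc_nonneg[OF lc]])
  show "At t f 0 \<in> sets lebesgue" using At_convex[OF lc] t by (intro convex_sets_lebesgue) simp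
  show "0 < sqrt t * sup_norm f" using t S_pos by simp
  show "\<And>x. x \<in> At t f 0 \<Longrightarrow> sqrt t * sup_norm f \<le> f x" using At0_lb t by simp
qed

lemma Atx_lmeas:
  assumes t: "0 < t"
  shows "At t f x \<in> lmeasurable" "measure lebesgue (At t f x) \<le> measure lebesgue (At t f 0)"
proof -
  define T where "T = (+) ((1/2) *\<^sub>R x) ` At t f 0"
  have T: "T \<in> lmeasurable" unfolding T_def by (rule measurable_translation[OF At0_lmeas[OF t]])
  have sub: "At t f x \<subseteq> T"
  proof
    fix z assume "z \<in> At t f x"
    then have h: "z - (1/2) *\<^sub>R x \<in> At t f 0" by (rule At_shift[OF lc])
    have "z = (1/2) *\<^sub>R x + (z - (1/2) *\<^sub>R x)" by simp
    from image_eqI[where f="(+) ((1/2) *\<^sub>R x)", OF this h] show "z \<in> T" unfolding T_def .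
  qed
  have s: "At t f x \<in> sets lebesgue" using At_convex[OF lc] t by (intro convex_sets_lebesgue) simp
  show "At t f x \<in> lmeasurable" by (rule fmeasurableI2[OF T sub s])
  have "measure lebesgue (At t f x) \<le> measure lebesgue T"
    by (rule measure_mono_fmeasurable[OF sub s T])
  also have "\<dots> = measure lebesgue (At t f 0)" unfolding T_def by (rule measure_translation)
  finally show "measure lebesgue (At t f x) \<le> measure lebesgue (At t f 0)" .
qed

lemma Mt_eq:
  assumes t: "0 < t" shows "Mt t f = measure lebesgue (At t f 0)"
proof -
  obtain p where p: "f p > 0" using ex_pos by blast
  have z: "0 \<in> diff_set (supp f) (supp f)"
    using p by (auto simp: diff_set_def supp_def intro!: exI[of _ p])
  show ?thesis unfolding Mt_def
  proof (rule antisym)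
    show "(SUP x0\<in>diff_set (supp f) (supp f). measure lebesgue (At t f x0)) \<le> measure lebesgue (At t f 0)"
      using z Atx_lmeas(2)[OF t] by (intro cSUP_least) auto
    show "measure lebesgue (At t f 0) \<le> (SUP x0\<in>diff_set (supp f) (supp f). measure lebesgue (At t f x0))"
      using z Atx_lmeas(2)[OF t] by (intro cSUP_upper bdd_aboveI2) auto
  qed
qed

end

lemma conv_sup:
  fixes K :: "'a::euclidean_space set"
  assumes K: "K \<in> lmeasurable"
  shows "(SUP z. measure lebesgue (K \<inter> (\<lambda>y. z - y) ` uminus ` K)) = measure lebesgue K"
proof -
  have le: "measure lebesgue (K \<inter> (+) z ` K) \<le> measure lebesgue K" for z
  proof (rule measure_mono_fmeasurable[OF _ _ K])
    show "K \<inter> (+) z ` K \<in> sets lebesgue"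
      using K lebesgue_sets_translation[of K z] by (intro sets.Int) auto
  qed auto
  show ?thesis unfolding img_neg
  proof (rule antisym)
    show "(SUP z. measure lebesgue (K \<inter> (+) z ` K)) \<le> measure lebesgue K"
      using le by (intro cSUP_least) auto
    have "measure lebesgue K = measure lebesgue (K \<inter> (+) 0 ` K)" by simp
    also have "\<dots> \<le> (SUP z. measure lebesgue (K \<inter> (+) z ` K))"
      using le by (intro cSUP_upper bdd_aboveI2) auto
    finally show "measure lebesgue K \<le> (SUP z. measure lebesgue (K \<inter> (+) z ` K))" .
  qed
qed


theorem lemma3p7:
  fixes f :: "'a::euclidean_space \<Rightarrow> real" and \<theta> t :: real
  assumes "log_concave f"
    and "f integrable_on UNIV"
    and "interior (supp f) \<noteq> {}"
    and "0 \<le> \<theta>" "\<theta> \<le> 1"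
    and "0 < t" "t \<le> 1"
  shows "conv_body (At t f 0) \<theta> (uminus ` At t f 0) \<subseteq> Ct \<theta> t f \<and>
         Ct \<theta> t f \<subseteq> conv_body (At (t\<^sup>2) f 0) (Mt t f / Mt (t\<^sup>2) f * \<theta>) (uminus ` At (t\<^sup>2) f 0)"
proof -
  note lc = assms(1) and int = assms(2) and ne = assms(3) and th = assms(4) and t = assms(6)
  define S where "S = sup_norm f"
  define K1 where "K1 = At t f 0"
  define K2 where "K2 = At (t\<^sup>2) f 0"
  have t2: "0 < t\<^sup>2" using t by simp
  have K1: "K1 \<in> lmeasurable" unfolding K1_def by (rule At0_lmeas[OF lc int ne t])
  have K2: "K2 \<in> lmeasurable" unfolding K2_def by (rule At0_lmeas[OF lc int ne t2])
  have Mt1: "Mt t f = measure lebesgue K1" unfolding K1_def by (rule Mt_eq[OF lc int ne t])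
  have Mt2: "Mt (t\<^sup>2) f = measure lebesgue K2" unfolding K2_def by (rule Mt_eq[OF lc int ne t2])
  have Spos: "0 < S" unfolding S_def by (rule S_pos[OF lc int ne])
  have Sge: "\<And>z. f z \<le> S" unfolding S_def by (rule S_ge[OF lc int ne])
  have tr_sets: "\<And>K z. K \<in> lmeasurable \<Longrightarrow> K \<inter> (+) z ` K \<in> sets lebesgue"
    using lebesgue_sets_translation by (metis fmeasurableD sets.Int)
  have part1: "conv_body K1 \<theta> (uminus ` K1) \<subseteq> Ct \<theta> t f"
  proof
    fix x assume "x \<in> conv_body K1 \<theta> (uminus ` K1)"
    then have xm: "x \<in> minkowski_sum K1 (uminus ` K1)"
      and xmeas: "\<theta> * (SUP z. measure lebesgue (K1 \<inter> (\<lambda>y. z - y) ` uminus ` K1))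
                   \<le> measure lebesgue (K1 \<inter> (+) x ` K1)"
      by (auto simp: conv_body_def img_neg)
    from xm obtain a b where ab: "a \<in> K1" "b \<in> K1" "x = a - b"
      by (auto simp: minkowski_sum_def)
    have lb: "\<And>z. z \<in> K1 \<Longrightarrow> sqrt t * S \<le> f z"
      unfolding K1_def S_def using At0_lb[OF lc int ne] t by simp
    have pos: "\<And>z. z \<in> K1 \<Longrightarrow> 0 < f z" unfolding K1_def by (simp add: At_mem)
    have prod: "t * S\<^sup>2 \<le> f u * f v" if "u \<in> K1" "v \<in> K1" for u v
    proof -
      have "t * S\<^sup>2 = (sqrt t * S) * (sqrt t * S)" using t by (simp add: power2_eq_square)
      also have "\<dots> \<le> f u * f v" using lb[OF that(1)] lb[OF that(2)] t Spos pos[OF that(1)]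
        by (intro mult_mono) auto
      finally show ?thesis .
    qed
    have sub: "K1 \<inter> (+) x ` K1 \<subseteq> At t f x"
    proof
      fix w assume w: "w \<in> K1 \<inter> (+) x ` K1"
      then obtain u where u: "u \<in> K1" "w = x + u" by auto
      then have "w - x = u" by simp
      then show "w \<in> At t f x" using w u pos prod[of w u] by (simp add: At_mem S_def)
    qed
    have ain: "a \<in> At t f x"
      using ab pos prod[of a b] by (simp add: At_mem S_def)
    have xd: "x \<in> diff_set (supp f) (supp f)"
      using ab pos by (auto simp: diff_set_def supp_def)
    have Ax: "At t f x \<in> lmeasurable" by (rule Atx_lmeas(1)[OF lc int ne t])
    have "\<theta> * Mt t f = \<theta> * (SUP z. measure lebesgue (K1 \<inter> (\<lambda>y. z - y) ` uminus ` K1))"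
      using conv_sup[OF K1] Mt1 by simp
    also have "\<dots> \<le> measure lebesgue (K1 \<inter> (+) x ` K1)" by (rule xmeas)
    also have "\<dots> \<le> measure lebesgue (At t f x)"
      by (rule measure_mono_fmeasurable[OF sub tr_sets[OF K1] Ax])
    finally show "x \<in> Ct \<theta> t f" using xd ain by (auto simp: Ct_def)
  qed
  have part2: "Ct \<theta> t f \<subseteq> conv_body K2 (Mt t f / Mt (t\<^sup>2) f * \<theta>) (uminus ` K2)"
  proof
    fix x assume "x \<in> Ct \<theta> t f"
    then have Ane: "At t f x \<noteq> {}" and meas: "\<theta> * Mt t f \<le> measure lebesgue (At t f x)"
      by (auto simp: Ct_def)
    have key: "z \<in> K2 \<and> z - x \<in> K2" if z: "z \<in> At t f x" for z
    proof -
      have z1: "f z > 0" "f (z - x) > 0" "t * S\<^sup>2 \<le> f z * f (z - x)"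
        using z by (auto simp: At_mem S_def)
      have "t * S * S \<le> f z * S"
      proof -
        have "t * S * S = t * S\<^sup>2" by (simp add: power2_eq_square)
        also have "\<dots> \<le> f z * f (z - x)" by (rule z1(3))
        also have "\<dots> \<le> f z * S" using z1 Sge[of "z - x"] by (intro mult_left_mono) auto
        finally show ?thesis .
      qed
      then have a: "t * S \<le> f z" using Spos by simp
      have "t * S * S \<le> S * f (z - x)"
      proof -
        have "t * S * S = t * S\<^sup>2" by (simp add: power2_eq_square)
        also have "\<dots> \<le> f z * f (z - x)" by (rule z1(3))
        also have "\<dots> \<le> S * f (z - x)" using z1 Sge[of z] by (intro mult_right_mono) auto
        finally show ?thesis .
      qed
      then have b: "t * S \<le> f (z - x)" using Spos by (simp add: mult.commute)
      have tS: "0 \<le> t * S" using t Spos by simp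
      have "(t\<^sup>2) * S\<^sup>2 = (t * S) * (t * S)" by (simp add: power2_eq_square)
      then have c1: "(t\<^sup>2) * S\<^sup>2 \<le> f z * f z" and c2: "(t\<^sup>2) * S\<^sup>2 \<le> f (z - x) * f (z - x)"
        using a b tS by (auto intro: mult_mono)
      show ?thesis using z1 c1 c2 unfolding K2_def by (simp add: At_mem S_def)
    qed
    obtain z where z: "z \<in> At t f x" using Ane by blast
    have xm: "x \<in> minkowski_sum K2 (uminus ` K2)"
    proof -
      have "-(z - x) \<in> uminus ` K2" using key[OF z] by blast
      moreover have "x = z + -(z - x)" by simp
      ultimately show ?thesis unfolding minkowski_sum_def using key[OF z] by blast
    qed
    have sub2: "At t f x \<subseteq> K2 \<inter> (+) x ` K2"
    proof
      fix w assume w: "w \<in> At t f x"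
      have "w = x + (w - x)" by simp
      then have "w \<in> (+) x ` K2" using key[OF w] by (metis image_eqI)
      then show "w \<in> K2 \<inter> (+) x ` K2" using key[OF w] by blast
    qed
    have J2: "K2 \<inter> (+) x ` K2 \<in> lmeasurable"
      by (rule fmeasurableI2[OF K2 _ tr_sets[OF K2]]) blast
    have mm: "measure lebesgue (At t f x) \<le> measure lebesgue (K2 \<inter> (+) x ` K2)"
      by (rule measure_mono_fmeasurable[OF sub2 _ J2])
         (rule convex_sets_lebesgue[OF At_convex[OF lc]], use t in simp)
    have "Mt t f / Mt (t\<^sup>2) f * \<theta> * (SUP z. measure lebesgue (K2 \<inter> (\<lambda>y. z - y) ` uminus ` K2))
          \<le> measure lebesgue (K2 \<inter> (+) x ` K2)"
    proof (cases "measure lebesgue K2 = 0")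
      case True
      then show ?thesis using Mt2 by simp
    next
      case False
      then have "Mt t f / Mt (t\<^sup>2) f * \<theta> * (SUP z. measure lebesgue (K2 \<inter> (\<lambda>y. z - y) ` uminus ` K2))
                 = \<theta> * Mt t f"
        using Mt2 conv_sup[OF K2] by simp
      then show ?thesis using meas mm by linarith
    qed
    then show "x \<in> conv_body K2 (Mt t f / Mt (t\<^sup>2) f * \<theta>) (uminus ` K2)"
      using xm by (simp add: conv_body_def img_neg)
  qed
  show ?thesis using part1 part2 unfolding K1_def K2_def by blast
qed

end
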